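(* For each $*\in\{\mathrm{nc},\mathrm{c},\mathrm{cr},\mathrm{u},\mathrm{cu},\mathrm{cur}\}$ the functor $\mathfrak{P}^*:\mathbf{A}_*\to\mathbf{A}_*$ is homotopy invariant: if $f,g:A\to B$ are homotopic morphisms in $\mathbf{A}_*$, then $\mathfrak{P}^*(f)=\mathfrak{P}^*(g)$.
   Context: Fix a field $\mathbb{F}$; algebras are associative $\mathbb{F}$-algebras. $\mathbf{A}_{\mathrm{nc}}$: all algebras; $\mathbf{A}_{\mathrm{c}},\mathbf{A}_{\mathrm{cr}}$: commutative, resp. commutative reduced algebras; $\mathbf{A}_{\mathrm{u}}$: unital algebras with unit-preserving morphisms; $\mathbf{A}_{\mathrm{cu}},\mathbf{A}_{\mathrm{cur}}$: commutative, resp. commutative reduced unital algebras. For $*\in\{\mathrm{nc},\mathrm{c},\mathrm{cr}\}$ and $A\in\mathbf{A}_{\mathrm{nc}}$ (resp. $*\in\{\mathrm{u},\mathrm{cu},\mathrm{cur}\}$ and $A\in\mathbf{A}_{\mathrm{u}}$), $\mathfrak{P}^*(A)$ is the set of $a\in A$ such that for every $C\in\mathbf{A}_*$ and every algebra morphism (resp. unit-preserving morphism) $\varphi:A\to C[x]$, $\varphi(a)$ is a constant polynomial, i.e. lies in $C\subseteq C[x]$. (The paper defines $\mathfrak{P}^*(A)$ as the equalizer of two maps $A\to\varprojlim\mathfrak{M}^*_{A,\mathbb{F}[x]}$ induced by evaluation at $x=0$ and $x=1$, and proves it equals this set.) $\mathfrak{P}^*(A)$ is a subalgebra of $A$ and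 every morphism $f:A\to B$ maps $\mathfrak{P}^*(A)$ into $\mathfrak{P}^*(B)$; $\mathfrak{P}^*(f):=f|_{\mathfrak{P}^*(A)}$. Homotopy: for $B\in\mathbf{A}_*$, $B[x]=B\otimes\mathbb{F}[x]$, $\mathrm{p}_0,\mathrm{p}_1:B[x]\to B$ are evaluations at $0,1$; $f,g:A\to B$ are elementary homotopic in $\mathbf{A}_*$ if there is a morphism $H:A\to B[x]$ in $\mathbf{A}_*$ with $\mathrm{p}_0H=f$, $\mathrm{p}_1H=g$, and homotopic if connected by a finite chain of elementary homotopies. *)

theory Defs
  imports Main
begin

text \<open>Algebras over a field 'k, given by a carrier set inside a type 'a together with
  operations.  The field \<open>one\<close> is only relevant in the unital categories.\<close>

record ('k, 'a) alg =
  carrier :: "'a set"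
  zero :: 'a
  plus :: "'a \<Rightarrow> 'a \<Rightarrow> 'a"
  mult :: "'a \<Rightarrow> 'a \<Rightarrow> 'a"
  smult :: "'k \<Rightarrow> 'a \<Rightarrow> 'a"
  one :: 'a

definition alg :: "('k::field, 'a) alg \<Rightarrow> bool" where
  "alg A \<longleftrightarrow>
     zero A \<in> carrier A \<and>
     (\<forall>a\<in>carrier A. \<forall>b\<in>carrier A. plus A a b \<in> carrier A) \<and>
     (\<forall>a\<in>carrier A. \<forall>b\<in>carrier A. mult A a b \<in> carrier A) \<and>
     (\<forall>c. \<forall>a\<in>carrier A. smult A c a \<in> carrier A) \<and>
     (\<forall>a\<in>carrier A. \<forall>b\<in>carrier A. \<forall>d\<in>carrier A. plus A (plus A a b) d = plus A a (plus A b d)) \<and>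
     (\<forall>a\<in>carrier A. \<forall>b\<in>carrier A. plus A a b = plus A b a) \<and>
     (\<forall>a\<in>carrier A. plus A (zero A) a = a) \<and>
     (\<forall>a\<in>carrier A. plus A a (smult A (-1) a) = zero A) \<and>
     (\<forall>a\<in>carrier A. smult A 1 a = a) \<and>
     (\<forall>c d. \<forall>a\<in>carrier A. smult A (c * d) a = smult A c (smult A d a)) \<and>
     (\<forall>c d. \<forall>a\<in>carrier A. smult A (c + d) a = plus A (smult A c a) (smult A d a)) \<and>
     (\<forall>c. \<forall>a\<in>carrier A. \<forall>b\<in>carrier A. smult A c (plus A a b) = plus A (smult A c a) (smult A c b)) \<and>
     (\<forall>a\<in>carrier A. \<forall>b\<in>carrier A. \<forall>d\<in>carrier A. mult A (mult A a b) d = mult A a (mult A b d)) \<and>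
     (\<forall>a\<in>carrier A. \<forall>b\<in>carrier A. \<forall>d\<in>carrier A. mult A a (plus A b d) = plus A (mult A a b) (mult A a d)) \<and>
     (\<forall>a\<in>carrier A. \<forall>b\<in>carrier A. \<forall>d\<in>carrier A. mult A (plus A a b) d = plus A (mult A a d) (mult A b d)) \<and>
     (\<forall>c. \<forall>a\<in>carrier A. \<forall>b\<in>carrier A. smult A c (mult A a b) = mult A (smult A c a) b) \<and>
     (\<forall>c. \<forall>a\<in>carrier A. \<forall>b\<in>carrier A. smult A c (mult A a b) = mult A a (smult A c b))"

text \<open>\<open>npow A a n\<close> is the power $a^{n+1}$ (no unit needed).\<close>
primrec npow :: "('k, 'a) alg \<Rightarrow> 'a \<Rightarrow> nat \<Rightarrow> 'a" where
  "npow A a 0 = a"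
| "npow A a (Suc n) = mult A a (npow A a n)"

definition commutative :: "('k, 'a) alg \<Rightarrow> bool" where
  "commutative A \<longleftrightarrow> (\<forall>a\<in>carrier A. \<forall>b\<in>carrier A. mult A a b = mult A b a)"

definition reduced :: "('k, 'a) alg \<Rightarrow> bool" where
  "reduced A \<longleftrightarrow> (\<forall>a\<in>carrier A. \<forall>n. npow A a n = zero A \<longrightarrow> a = zero A)"

definition unital_alg :: "('k, 'a) alg \<Rightarrow> bool" where
  "unital_alg A \<longleftrightarrow> one A \<in> carrier A \<and>
     (\<forall>a\<in>carrier A. mult A (one A) a = a \<and> mult A a (one A) = a)"

datatype cat = NC | Cm | CR | U | CU | CUR

definition is_unital_cat :: "cat \<Rightarrow> bool" where
  "is_unital_cat k \<longleftrightarrow> k \<in> {U, CU, CUR}"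

definition in_cat :: "cat \<Rightarrow> ('k::field, 'a) alg \<Rightarrow> bool" where
  "in_cat k A \<longleftrightarrow> alg A
     \<and> (k \<in> {Cm, CR, CU, CUR} \<longrightarrow> commutative A)
     \<and> (k \<in> {CR, CUR} \<longrightarrow> reduced A)
     \<and> (is_unital_cat k \<longrightarrow> unital_alg A)"

definition mor :: "cat \<Rightarrow> ('k, 'a) alg \<Rightarrow> ('k, 'b) alg \<Rightarrow> ('a \<Rightarrow> 'b) \<Rightarrow> bool" where
  "mor k A B f \<longleftrightarrow>
     (\<forall>a\<in>carrier A. f a \<in> carrier B) \<and>
     (\<forall>a\<in>carrier A. \<forall>b\<in>carrier A. f (plus A a b) = plus B (f a) (f b)) \<and>
     (\<forall>a\<in>carrier A. \<forall>b\<in>carrier A. f (mult A a b) = mult B (f a) (f b)) \<and>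
     (\<forall>c. \<forall>a\<in>carrier A. f (smult A c a) = smult B c (f a)) \<and>
     (is_unital_cat k \<longrightarrow> f (one A) = one B)"

text \<open>Polynomial algebra C[x]: coefficient sequences with finite support.\<close>
primrec asum :: "('k, 'c) alg \<Rightarrow> (nat \<Rightarrow> 'c) \<Rightarrow> nat \<Rightarrow> 'c" where
  "asum C p 0 = zero C"
| "asum C p (Suc n) = plus C (asum C p n) (p n)"

definition poly_alg :: "('k, 'c) alg \<Rightarrow> ('k, nat \<Rightarrow> 'c) alg" where
  "poly_alg C = \<lparr> carrier = {p. (\<forall>n. p n \<in> carrier C) \<and> (\<exists>N. \<forall>n\<ge>N. p n = zero C)},
     zero = (\<lambda>_. zero C),
     plus = (\<lambda>p q n. plus C (p n) (q n)),
     mult = (\<lambda>p q n. asum C (\<lambda>i. mult C (p i) (q (n - i))) (Suc n)),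
     smult = (\<lambda>c p n. smult C c (p n)),
     one = (\<lambda>n. if n = 0 then one C else zero C) \<rparr>"

text \<open>Evaluation at x = 0 and x = 1.\<close>
definition ev0 :: "('k, 'c) alg \<Rightarrow> (nat \<Rightarrow> 'c) \<Rightarrow> 'c" where
  "ev0 C p = p 0"

definition ev1 :: "('k, 'c) alg \<Rightarrow> (nat \<Rightarrow> 'c) \<Rightarrow> 'c" where
  "ev1 C p = asum C p (LEAST N. \<forall>n\<ge>N. p n = zero C)"

definition is_const :: "('k, 'c) alg \<Rightarrow> (nat \<Rightarrow> 'c) \<Rightarrow> bool" where
  "is_const C p \<longleftrightarrow> (\<forall>n\<ge>1. p n = zero C)"

definition elem_homotopic ::
  "cat \<Rightarrow> ('k::field, 'a) alg \<Rightarrow> ('k, 'b) alg \<Rightarrow> ('a \<Rightarrow> 'b) \<Rightarrow> ('a \<Rightarrow> 'b) \<Rightarrow> bool" where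
  "elem_homotopic k A B f g \<longleftrightarrow>
     (\<exists>H. mor k A (poly_alg B) H \<and>
          (\<forall>a\<in>carrier A. ev0 B (H a) = f a \<and> ev1 B (H a) = g a))"

inductive homotopic ::
  "cat \<Rightarrow> ('k::field, 'a) alg \<Rightarrow> ('k, 'b) alg \<Rightarrow> ('a \<Rightarrow> 'b) \<Rightarrow> ('a \<Rightarrow> 'b) \<Rightarrow> bool"
  for k A B where
  refl: "mor k A B f \<Longrightarrow> homotopic k A B f f"
| step: "homotopic k A B f g \<Longrightarrow> mor k A B h \<Longrightarrow>
         elem_homotopic k A B g h \<or> elem_homotopic k A B h g \<Longrightarrow> homotopic k A B f h"

text \<open>Since HOL cannot quantify over all types, the test algebras C
  range over algebras whose carrier lies in the type ('k \<times> 'a \<times> nat) list, whose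
  cardinality max(|k|,|A|,aleph_0) bounds the size of the subalgebra of C generated by the
  coefficients of \<phi>(A); hence this gives the same set as quantifying over all algebras.\<close>
definition P :: "cat \<Rightarrow> ('k::field, 'a) alg \<Rightarrow> 'a set" where
  "P k A = {a \<in> carrier A.
     \<forall>(C :: ('k, ('k \<times> 'a \<times> nat) list) alg) \<phi>.
        in_cat k C \<longrightarrow> mor k A (poly_alg C) \<phi> \<longrightarrow> is_const C (\<phi> a)}"

end

theory Submission
  imports Defs
begin

locale tr =
  fixes A :: "('k::field, 'a) alg" and B :: "('k, 'b) alg" and H :: "'a \<Rightarrow> nat \<Rightarrow> 'b"
  assumes algB: "alg B" and Hc: "\<And>a n. a \<in> carrier A \<Longrightarrow> H a n \<in> carrier B"
begin

definition oneB :: 'b where "oneB = (if one B \<in> carrier B then one B else zero B)"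

fun tstep :: "('k \<times> 'a \<times> nat) \<Rightarrow> 'b list \<Rightarrow> 'b list" where
  "tstep (c, a, t) st =
    (if t = 0 then (case st of x # y # r \<Rightarrow> plus B y x # r | _ \<Rightarrow> st)
     else if t = 1 then (case st of x # y # r \<Rightarrow> mult B y x # r | _ \<Rightarrow> st)
     else if t = 2 then (case st of x # r \<Rightarrow> smult B c x # r | _ \<Rightarrow> st)
     else if t = 3 then zero B # st
     else if t = 4 then oneB # st
     else (if a \<in> carrier A then H a (t - 5) else zero B) # st)"

definition rep :: "('k \<times> 'a \<times> nat) list \<Rightarrow> 'b \<Rightarrow> bool" where
  "rep l s \<longleftrightarrow> (\<forall>st. fold tstep l st = s # st)"

definition S :: "'b set" where "S = {s. \<exists>l. rep l s}"

definition r :: "'b \<Rightarrow> ('k \<times> 'a \<times> nat) list" where "r s = (SOME l. rep l s)"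

definition e :: "('k \<times> 'a \<times> nat) list \<Rightarrow> 'b" where "e l = hd (fold tstep l [])"

lemma e_r[simp]: "s \<in> S \<Longrightarrow> e (r s) = s"
proof -
  assume "s \<in> S"
  then have "rep (r s) s" unfolding S_def r_def by (auto intro: someI)
  then show ?thesis unfolding rep_def e_def by simp
qed

lemma S_plus[simp]: "s \<in> S \<Longrightarrow> t \<in> S \<Longrightarrow> plus B s t \<in> S"
proof -
  assume "s \<in> S" "t \<in> S"
  then obtain l1 l2 where "rep l1 s" "rep l2 t" unfolding S_def by auto
  then have "rep (l1 @ l2 @ [(0, undefined, 0)]) (plus B s t)" unfolding rep_def by simp
  then show ?thesis unfolding S_def by blast
qed

lemma S_mult[simp]: "s \<in> S \<Longrightarrow> t \<in> S \<Longrightarrow> mult B s t \<in> S"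
proof -
  assume "s \<in> S" "t \<in> S"
  then obtain l1 l2 where "rep l1 s" "rep l2 t" unfolding S_def by auto
  then have "rep (l1 @ l2 @ [(0, undefined, 1)]) (mult B s t)" unfolding rep_def by simp
  then show ?thesis unfolding S_def by blast
qed

lemma S_smult[simp]: "s \<in> S \<Longrightarrow> smult B c s \<in> S"
proof -
  assume "s \<in> S"
  then obtain l1 where "rep l1 s" unfolding S_def by auto
  then have "rep (l1 @ [(c, undefined, 2)]) (smult B c s)" unfolding rep_def by simp
  then show ?thesis unfolding S_def by blast
qed

lemma S_zero[simp]: "zero B \<in> S"
proof -
  have "rep [(0, undefined, 3)] (zero B)" unfolding rep_def by simp
  then show ?thesis unfolding S_def by blast
qed

lemma S_one: "one B \<in> carrier B \<Longrightarrow> one B \<in> S"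
proof -
  assume "one B \<in> carrier B"
  then have "rep [(0, undefined, 4)] (one B)" unfolding rep_def by (simp add: oneB_def)
  then show ?thesis unfolding S_def by blast
qed

lemma S_H[simp]: "a \<in> carrier A \<Longrightarrow> H a n \<in> S"
proof -
  assume "a \<in> carrier A"
  then have "rep [(0, a, n + 5)] (H a n)" unfolding rep_def by simp
  then show ?thesis unfolding S_def by blast
qed

lemma B_ax: 
  "zero B \<in> carrier B"
     "(\<forall>a\<in>carrier B. \<forall>b\<in>carrier B. plus B a b \<in> carrier B)"
     "(\<forall>a\<in>carrier B. \<forall>b\<in>carrier B. mult B a b \<in> carrier B)"
     "(\<forall>c. \<forall>a\<in>carrier B. smult B c a \<in> carrier B)"
  using algB unfolding alg_def by auto

lemma tstep_carrier: "set st \<subseteq> carrier B \<Longrightarrow> set (tstep x st) \<subseteq> carrier B"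
  using B_ax Hc
  by (cases x) (auto simp: oneB_def split: list.splits)

lemma fold_carrier: "set st \<subseteq> carrier B \<Longrightarrow> set (fold tstep l st) \<subseteq> carrier B"
  by (induction l arbitrary: st) (auto dest: tstep_carrier)

lemma S_carrier[simp]: "s \<in> S \<Longrightarrow> s \<in> carrier B"
proof -
  assume "s \<in> S"
  then obtain l where "rep l s" unfolding S_def by auto
  then have "fold tstep l [] = [s]" unfolding rep_def by simp
  then show ?thesis using fold_carrier[of "[]" l] by simp
qed

definition C :: "('k, ('k \<times> 'a \<times> nat) list) alg" where
  "C = \<lparr> carrier = r ` S, zero = r (zero B),
     plus = (\<lambda>x y. r (plus B (e x) (e y))),
     mult = (\<lambda>x y. r (mult B (e x) (e y))),
     smult = (\<lambda>c x. r (smult B c (e x))),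
     one = r (one B) \<rparr>"

lemma C_simps[simp]: "carrier C = r ` S" "zero C = r (zero B)"
  "plus C x y = r (plus B (e x) (e y))" "mult C x y = r (mult B (e x) (e y))"
  "smult C c x = r (smult B c (e x))" "one C = r (one B)"
  by (simp_all add: C_def)

lemma carrC_e: "x \<in> r ` S \<Longrightarrow> e x \<in> S" by auto
lemma carrC_r: "x \<in> r ` S \<Longrightarrow> r (e x) = x" by auto

lemma Bx:
  "\<And>a b x. a\<in>S \<Longrightarrow> b\<in>S \<Longrightarrow> x\<in>S \<Longrightarrow> plus B (plus B a b) x = plus B a (plus B b x)"
  "\<And>a b. a\<in>S \<Longrightarrow> b\<in>S \<Longrightarrow> plus B (zero B) a = a"
  "\<And>a. a\<in>S \<Longrightarrow> plus B a (smult B (-1) a) = zero B"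
  "\<And>a. a\<in>S \<Longrightarrow> smult B 1 a = a"
  "\<And>a c d. a\<in>S \<Longrightarrow> smult B (c * d) a = smult B c (smult B d a)"
  "\<And>a c d. a\<in>S \<Longrightarrow> smult B (c + d) a = plus B (smult B c a) (smult B d a)"
  "\<And>a b c. a\<in>S \<Longrightarrow> b\<in>S \<Longrightarrow> smult B c (plus B a b) = plus B (smult B c a) (smult B c b)"
  "\<And>a b x. a\<in>S \<Longrightarrow> b\<in>S \<Longrightarrow> x\<in>S \<Longrightarrow> mult B (mult B a b) x = mult B a (mult B b x)"
  "\<And>a b x. a\<in>S \<Longrightarrow> b\<in>S \<Longrightarrow> x\<in>S \<Longrightarrow> mult B a (plus B b x) = plus B (mult B a b) (mult B a x)"
  "\<And>a b x. a\<in>S \<Longrightarrow> b\<in>S \<Longrightarrow> x\<in>S \<Longrightarrow> mult B (plus B a b) x = plus B (mult B a x) (mult B b x)"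
  "\<And>a b c. a\<in>S \<Longrightarrow> b\<in>S \<Longrightarrow> smult B c (mult B a b) = mult B (smult B c a) b"
  "\<And>a b c. a\<in>S \<Longrightarrow> b\<in>S \<Longrightarrow> smult B c (mult B a b) = mult B a (smult B c b)"
  using algB unfolding alg_def by (meson S_carrier)+

lemma Bcomm: "a\<in>S \<Longrightarrow> b\<in>S \<Longrightarrow> plus B a b = plus B b a"
  using algB unfolding alg_def by (meson S_carrier)

lemma algC: "alg C"
  unfolding alg_def C_simps
  apply (intro conjI)
  apply (auto simp: Bx)
  apply (metis Bcomm)
  apply (metis Bx(11) Bx(12))
  done

lemma commC: "commutative B \<Longrightarrow> commutative C"
  unfolding commutative_def by (auto dest!: S_carrier[OF carrC_e])

lemma npow_S: "s \<in> S \<Longrightarrow> npow B s n \<in> S"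
  by (induction n) auto

lemma npow_C: "x \<in> r ` S \<Longrightarrow> npow C x n = r (npow B (e x) n)"
  by (induction n) (auto simp: npow_S)

lemma redC: "reduced B \<Longrightarrow> reduced C"
  unfolding reduced_def
proof (intro ballI allI impI)
  fix x n assume rB: "\<forall>a\<in>carrier B. \<forall>n. npow B a n = zero B \<longrightarrow> a = zero B"
    and x: "x \<in> carrier C" and z: "npow C x n = zero C"
  from x obtain s where s: "s \<in> S" "x = r s" by auto
  have "r (npow B s n) = r (zero B)" using z s npow_C[of x n] by simp
  then have "e (r (npow B s n)) = e (r (zero B))" by simp
  then have "npow B s n = zero B" using s npow_S by simp
  then have "s = zero B" using rB s by auto
  then show "x = zero C" using s by simp
qed

lemma unC: "unital_alg B \<Longrightarrow> unital_alg C"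
  unfolding unital_alg_def using S_one by auto

lemma inC: "in_cat k B \<Longrightarrow> in_cat k C"
  unfolding in_cat_def using algC commC redC unC by blast

definition phi :: "'a \<Rightarrow> nat \<Rightarrow> ('k \<times> 'a \<times> nat) list" where
  "phi a = (\<lambda>n. r (H a n))"

lemma asum_C: "(\<And>i. f i \<in> S) \<Longrightarrow> asum C (\<lambda>i. r (f i)) m = r (asum B f m) \<and> asum B f m \<in> S"
  by (induction m) auto

lemma phi_mor:
  assumes m: "mor k A (poly_alg B) H"
  shows "mor k A (poly_alg C) phi"
proof -
  have Hp: "\<And>a b. a \<in> carrier A \<Longrightarrow> b \<in> carrier A \<Longrightarrow> H (plus A a b) = (\<lambda>n. plus B (H a n) (H b n))"
    and Hm: "\<And>a b. a \<in> carrier A \<Longrightarrow> b \<in> carrier A \<Longrightarrow> H (mult A a b) = (\<lambda>n. asum B (\<lambda>i. mult B (H a i) (H b (n - i))) (Suc n))"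
    and Hs: "\<And>c a. a \<in> carrier A \<Longrightarrow> H (smult A c a) = (\<lambda>n. smult B c (H a n))"
    and Ho: "is_unital_cat k \<Longrightarrow> H (one A) = (\<lambda>n. if n = 0 then one B else zero B)"
    and Hf: "\<And>a. a \<in> carrier A \<Longrightarrow> \<exists>N. \<forall>n\<ge>N. H a n = zero B"
    using m unfolding mor_def poly_alg_def by auto
  show ?thesis unfolding mor_def
  proof (intro conjI ballI allI impI)
    fix a assume a: "a \<in> carrier A"
    obtain N where "\<forall>n\<ge>N. H a n = zero B" using Hf[OF a] by blast
    then show "phi a \<in> carrier (poly_alg C)" using a unfolding poly_alg_def phi_def by (auto intro!: exI[of _ N])
  next
    fix a b assume a: "a \<in> carrier A" and b: "b \<in> carrier A"
    show "phi (plus A a b) = plus (poly_alg C) (phi a) (phi b)"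
      using a b by (simp add: phi_def poly_alg_def Hp)
    have "\<And>n. asum C (\<lambda>i. r (mult B (H a i) (H b (n - i)))) (Suc n) = r (asum B (\<lambda>i. mult B (H a i) (H b (n - i))) (Suc n))"
      using asum_C a b by simp
    then show "phi (mult A a b) = mult (poly_alg C) (phi a) (phi b)"
      using a b by (simp add: phi_def poly_alg_def Hm)
  next
    fix c a assume a: "a \<in> carrier A"
    show "phi (smult A c a) = smult (poly_alg C) c (phi a)"
      using a by (simp add: phi_def poly_alg_def Hs)
  next
    assume u: "is_unital_cat k"
    show "phi (one A) = one (poly_alg C)"
      using u by (auto simp: phi_def poly_alg_def Ho)
  qed
qed

end

lemma asum_const:
  assumes "alg B" "\<forall>n\<ge>1. p n = zero B" "p 0 \<in> carrier B"
  shows "ev1 B p = ev0 B p"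
proof -
  let ?L = "LEAST N. \<forall>n\<ge>N. p n = zero B"
  have "?L \<le> 1" using assms(2) by (simp add: Least_le)
  then consider "?L = 0" | "?L = 1" by linarith
  then show ?thesis
  proof cases
    case 1
    then have "p 0 = zero B" using LeastI_ex[of "\<lambda>N. \<forall>n\<ge>N. p n = zero B"] assms(2) by auto
    then show ?thesis using 1 by (simp add: ev1_def ev0_def)
  next
    case 2
    then show ?thesis using assms(1,3) by (simp add: ev1_def ev0_def alg_def)
  qed
qed

lemma elem_eq:
  assumes B: "in_cat k B" and h: "elem_homotopic k A B g h" and a: "a \<in> P k A"
  shows "g a = h a"
proof -
  obtain H where m: "mor k A (poly_alg B) H" and ev: "\<forall>a\<in>carrier A. ev0 B (H a) = g a \<and> ev1 B (H a) = h a"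
    using h unfolding elem_homotopic_def by blast
  have algB: "alg B" using B unfolding in_cat_def by simp
  have aA: "a \<in> carrier A" using a unfolding P_def by simp
  have Hc: "\<And>a n. a \<in> carrier A \<Longrightarrow> H a n \<in> carrier B"
    using m unfolding mor_def poly_alg_def by auto
  interpret tr A B H using algB Hc by unfold_locales auto
  have "is_const C (phi a)" using a inC[OF B] phi_mor[OF m] unfolding P_def by blast
  then have "\<forall>n\<ge>1. r (H a n) = r (zero B)" unfolding is_const_def phi_def by simp
  then have "\<forall>n\<ge>1. e (r (H a n)) = e (r (zero B))" by simp
  then have "\<forall>n\<ge>1. H a n = zero B" using aA by simp
  then have "ev1 B (H a) = ev0 B (H a)" using asum_const algB Hc aA by blast
  then show ?thesis using ev aA by simp
qed

theorem mainTheorem8: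
  fixes A :: "('k::field, 'a) alg" and B :: "('k, 'b) alg"
    and f g :: "'a \<Rightarrow> 'b" and k :: cat
  assumes "in_cat k A" and "in_cat k B"
    and "homotopic k A B f g"
  shows "\<forall>a\<in>P k A. f a = g a"
  using assms(3)
proof (induction rule: homotopic.induct)
  case (refl f)
  then show ?case by simp
next
  case (step f g h)
  then show ?case using elem_eq[OF assms(2)] by metis
qed

end
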